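(* Let $n,s,t$ be nonnegative integers with $n\ge 2$, and let $U=\{1,\dots,n\}$. Let $R$ be a relation between subsets of $U$ and bit strings of length $n+s$ (the representations of a systematic data structure) such that every $S\subseteq U$ has at least one representation $B$ with $(S,B)\in R$, and whenever $(S,B)\in R$ with $B=(B_1,\dots,B_{n+s})$, we have $B_\ell=1\iff\ell\in S$ for $\ell=1,\dots,n$. Assume that for each $r\in\{1,\dots,n\}$ there is an adaptive bit-probe algorithm (a deterministic decision tree that queries individual bits of its input) which, for every $S\subseteq U$ with $|S|=r$ and every $B$ with $(S,B)\in R$, probes at most $rt$ bits of $B$ and outputs $S$ (i.e., distinguishes among the $\binom{n}{r}$ subsets of size $r$). Then $$\Big(s+\frac{1}{\ln 2}\Big)t\ \ge\ \frac{n}{e\ln 2},$$ and, if $s>0$, $st\ge n/2$. *)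

theory Defs
  imports Complex_Main
begin

text \<open>A node Probe i t0 t1 probes bit position i (1-based, i.e. list entry i-1)
  of the input bit string and continues in t0 if the bit is 0 (False), in t1 if it is 1.\<close>
datatype 'a dtree = Out 'a | Probe nat "'a dtree" "'a dtree"

fun dt_out :: "'a dtree \<Rightarrow> bool list \<Rightarrow> 'a" where
  "dt_out (Out x) B = x"
| "dt_out (Probe i t0 t1) B = (if B ! (i - 1) then dt_out t1 B else dt_out t0 B)"

fun dt_probes :: "'a dtree \<Rightarrow> bool list \<Rightarrow> nat" where
  "dt_probes (Out x) B = 0"
| "dt_probes (Probe i t0 t1) B = Suc (if B ! (i - 1) then dt_probes t1 B else dt_probes t0 B)"

end

theory Submission
  imports Defs
begin

definition g :: "nat \<Rightarrow> nat \<Rightarrow> nat \<Rightarrow> nat" where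
  "g k a b = 2 ^ (min b k) * ((k - min b k + a) choose a)"

lemma choose_mono_top: "(m choose a) \<le> (Suc m choose a)"
  by (cases a) auto

lemma choose_mono_top': "m \<le> m' \<Longrightarrow> (m choose a) \<le> (m' choose a)"
  by (rule lift_Suc_mono_le[of "\<lambda>m. m choose a"]) (auto intro: choose_mono_top)

lemma g0: "g 0 a b = 1" by (simp add: g_def)

lemma g_mono: "g k a b \<le> g (Suc k) a b"
proof (cases "b \<le> k")
  case True
  then have "Suc k - b + a = Suc (k - b + a)" by simp
  then show ?thesis using True
    by (simp add: g_def min_def choose_mono_top)
next
  case False
  then show ?thesis by (simp add: g_def min_def)
qed

lemma g_data: assumes "0 < a" shows "g k a b + g k (a-1) b \<le> g (Suc k) a b"
proof -
  obtain a' where a: "a = Suc a'" using assms by (cases a) auto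
  show ?thesis
  proof (cases "b \<le> k")
    case True
    define m where "m = k - b"
    have e: "Suc k - b = Suc m" using True by (simp add: m_def)
    have "(m + a' choose a') \<le> (m + Suc a' choose a')" by (rule choose_mono_top') simp
    then show ?thesis using True
      by (simp add: g_def min_def e a m_def[symmetric] algebra_simps)
  next
    case False
    then have "min b (Suc k) = Suc k" "min b k = k" by auto
    then show ?thesis by (simp add: g_def a)
  qed
qed

lemma g_red: assumes "0 < b" shows "2 * g k a (b - 1) \<le> g (Suc k) a b"
proof -
  obtain b' where b: "b = Suc b'" using assms by (cases b) auto
  show ?thesis by (simp add: g_def b min_def)
qed

lemma nth_beyond: "length B = length B' \<Longrightarrow> length B \<le> q \<Longrightarrow> B ! q = B' ! q"
proof (induction B arbitrary: B' q)
  case Nil then show ?case by simp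
next
  case (Cons x xs)
  then obtain y ys where B': "B' = y # ys" by (cases B') auto
  from Cons obtain q' where "q = Suc q'" by (cases q) auto
  then show ?case using Cons B' by simp
qed

lemma g_pos: "0 < g k a b"
  unfolding g_def by (simp add: zero_less_binomial)

lemma count:
  fixes T :: "'a dtree" and N L :: nat
  shows "\<And>X A k a b. (\<forall>B\<in>X. length B = L) \<Longrightarrow> (\<forall>B\<in>X. dt_probes T B \<le> k) \<Longrightarrow>
    (\<forall>B\<in>X. card {q. q < N \<and> q \<notin> A \<and> B ! q} \<le> a) \<Longrightarrow>
    (\<forall>B\<in>X. \<forall>B'\<in>X. \<forall>q\<in>A. B ! q = B' ! q) \<Longrightarrow> card ({N..<L} - A) \<le> b \<Longrightarrow>
    card (dt_out T ` X) \<le> g k a b"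
proof (induction T)
  case (Out x)
  have "dt_out (Out x) ` X \<subseteq> {x}" by auto
  then have "card (dt_out (Out x) ` X) \<le> card {x}" by (intro card_mono) auto
  then show ?case using g_pos[of k a b] by simp
next
  case (Probe i t0 t1)
  define q where "q = i - 1"
  show ?case
  proof (cases "X = {}")
    case True then show ?thesis by simp
  next
    case False
    then obtain B0 where B0: "B0 \<in> X" by auto
    have "dt_probes (Probe i t0 t1) B0 \<le> k" using Probe.prems(2) B0 by blast
    then have "k \<ge> 1" by simp
    then obtain k' where k: "k = Suc k'" using Suc_pred' by (metis One_nat_def Suc_le_eq)
    define X1 where "X1 = {B\<in>X. B ! q}"
    define X0 where "X0 = {B\<in>X. \<not> B ! q}"
    have split: "dt_out (Probe i t0 t1) ` X = dt_out t1 ` X1 \<union> dt_out t0 ` X0"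
    proof
      show "dt_out (Probe i t0 t1) ` X \<subseteq> dt_out t1 ` X1 \<union> dt_out t0 ` X0"
      proof
        fix y assume "y \<in> dt_out (Probe i t0 t1) ` X"
        then obtain B where B: "B \<in> X" "y = dt_out (Probe i t0 t1) B" by blast
        show "y \<in> dt_out t1 ` X1 \<union> dt_out t0 ` X0"
        proof (cases "B ! q")
          case True
          then have "B \<in> X1" "y = dt_out t1 B" using B by (simp_all add: X1_def q_def)
          then show ?thesis by blast
        next
          case False
          then have "B \<in> X0" "y = dt_out t0 B" using B by (simp_all add: X0_def q_def)
          then show ?thesis by blast
        qed
      qed
    next
      show "dt_out t1 ` X1 \<union> dt_out t0 ` X0 \<subseteq> dt_out (Probe i t0 t1) ` X"
      proof
        fix y assume "y \<in> dt_out t1 ` X1 \<union> dt_out t0 ` X0"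
        then show "y \<in> dt_out (Probe i t0 t1) ` X"
        proof
          assume "y \<in> dt_out t1 ` X1"
          then obtain B where B: "B \<in> X1" "y = dt_out t1 B" by blast
          then have "y = dt_out (Probe i t0 t1) B" "B \<in> X" by (simp_all add: X1_def q_def)
          then show ?thesis by blast
        next
          assume "y \<in> dt_out t0 ` X0"
          then obtain B where B: "B \<in> X0" "y = dt_out t0 B" by blast
          then have "y = dt_out (Probe i t0 t1) B" "B \<in> X" by (simp_all add: X0_def q_def)
          then show ?thesis by blast
        qed
      qed
    qed
    have cs: "card (dt_out (Probe i t0 t1) ` X) \<le> card (dt_out t1 ` X1) + card (dt_out t0 ` X0)"
      unfolding split by (rule card_Un_le)
    have p1: "\<forall>B\<in>X1. dt_probes t1 B \<le> k'"
    proof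
      fix B assume B: "B \<in> X1"
      then have "B \<in> X" "B ! q" by (auto simp: X1_def)
      then have "dt_probes (Probe i t0 t1) B \<le> k" using Probe.prems(2) by blast
      then show "dt_probes t1 B \<le> k'" using \<open>B ! q\<close> by (simp add: q_def k)
    qed
    have p0: "\<forall>B\<in>X0. dt_probes t0 B \<le> k'"
    proof
      fix B assume B: "B \<in> X0"
      then have "B \<in> X" "\<not> B ! q" by (auto simp: X0_def)
      then have "dt_probes (Probe i t0 t1) B \<le> k" using Probe.prems(2) by blast
      then show "dt_probes t0 B \<le> k'" using \<open>\<not> B ! q\<close> by (simp add: q_def k)
    qed
    have sub1: "X1 \<subseteq> X" and sub0: "X0 \<subseteq> X" by (auto simp: X1_def X0_def)
    have l1: "\<forall>B\<in>X1. length B = L" using Probe.prems(1) sub1 by blast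
    have l0: "\<forall>B\<in>X0. length B = L" using Probe.prems(1) sub0 by blast
    show ?thesis
    proof (cases "\<forall>B\<in>X. \<forall>B'\<in>X. B ! q = B' ! q")
      case True
      have allq: "\<And>B. B \<in> X \<Longrightarrow> B ! q = B0 ! q" using True B0 by blast
      have "X1 = {} \<or> X0 = {}"
      proof (cases "B0 ! q")
        case True
        then have "X0 = {}" unfolding X0_def using allq by blast
        then show ?thesis ..
      next
        case False
        then have "X1 = {}" unfolding X1_def using allq by blast
        then show ?thesis ..
      qed
      then show ?thesis
      proof
        assume e: "X1 = {}"
        have "card (dt_out t0 ` X0) \<le> g k' a b"
          by (rule Probe.IH(1)[where X=X0 and A=A and k=k' and a=a and b=b]) (fact l0, fact p0, use Probe.prems(3) sub0 in blast, use Probe.prems(4) sub0 in blast, fact Probe.prems(5))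
        then show ?thesis using cs e g_mono[of k' a b] k by simp
      next
        assume e: "X0 = {}"
        have "card (dt_out t1 ` X1) \<le> g k' a b"
          by (rule Probe.IH(2)[where X=X1 and A=A and k=k' and a=a and b=b]) (fact l1, fact p1, use Probe.prems(3) sub1 in blast, use Probe.prems(4) sub1 in blast, fact Probe.prems(5))
        then show ?thesis using cs e g_mono[of k' a b] k by simp
      qed
    next
      case False
      then have qA: "q \<notin> A" using Probe.prems(4) by blast
      have qL: "q < L"
      proof (rule ccontr)
        assume "\<not> q < L"
        then have "\<forall>B\<in>X. \<forall>B'\<in>X. B ! q = B' ! q" using Probe.prems(1)
          by (metis nth_beyond not_less)
        with False show False by blast
      qed
      define A' where "A' = insert q A"
      have ag1: "\<forall>B\<in>X1. \<forall>B'\<in>X1. \<forall>q'\<in>A'. B ! q' = B' ! q'"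
        using Probe.prems(4) by (auto simp: X1_def A'_def)
      have ag0: "\<forall>B\<in>X0. \<forall>B'\<in>X0. \<forall>q'\<in>A'. B ! q' = B' ! q'"
        using Probe.prems(4) by (auto simp: X0_def A'_def)
      show ?thesis
      proof (cases "q < N")
        case True
        have b': "{N..<L} - A' = {N..<L} - A" using True by (auto simp: A'_def)
        have o0: "\<forall>B\<in>X0. card {q'. q' < N \<and> q' \<notin> A' \<and> B ! q'} \<le> a"
        proof
          fix B assume B: "B \<in> X0"
          have "card {q'. q' < N \<and> q' \<notin> A' \<and> B ! q'} \<le> card {q'. q' < N \<and> q' \<notin> A \<and> B ! q'}"
            by (rule card_mono) (auto simp: A'_def)
          also have "\<dots> \<le> a" using Probe.prems(3) B by (auto simp: X0_def)
          finally show "card {q'. q' < N \<and> q' \<notin> A' \<and> B ! q'} \<le> a" .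
        qed
        have c0: "card (dt_out t0 ` X0) \<le> g k' a b"
          by (rule Probe.IH(1)[where X=X0 and A=A' and k=k' and a=a and b=b]) (fact l0, fact p0, fact o0, fact ag0, simp add: b' Probe.prems(5))
        show ?thesis
        proof (cases "a = 0")
          case True
          have "X1 = {}"
          proof (rule ccontr)
            assume "X1 \<noteq> {}"
            then obtain B where B: "B \<in> X1" by auto
            have "q \<in> {q'. q' < N \<and> q' \<notin> A \<and> B ! q'}" using B qA \<open>q < N\<close> by (auto simp: X1_def)
            moreover have "finite {q'. q' < N \<and> q' \<notin> A \<and> B ! q'}" by simp
            ultimately have "card {q'. q' < N \<and> q' \<notin> A \<and> B ! q'} > 0" by (metis card_gt_0_iff empty_iff)
            moreover have "card {q'. q' < N \<and> q' \<notin> A \<and> B ! q'} \<le> a" using Probe.prems(3) B sub1 by blast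
            ultimately show False using True by simp
          qed
          then show ?thesis using cs c0 g_mono[of k' a b] k by simp
        next
          case False
          have o1: "\<forall>B\<in>X1. card {q'. q' < N \<and> q' \<notin> A' \<and> B ! q'} \<le> a - 1"
          proof
            fix B assume B: "B \<in> X1"
            have e: "{q'. q' < N \<and> q' \<notin> A' \<and> B ! q'} = {q'. q' < N \<and> q' \<notin> A \<and> B ! q'} - {q}"
              by (auto simp: A'_def)
            have "q \<in> {q'. q' < N \<and> q' \<notin> A \<and> B ! q'}" using B qA \<open>q < N\<close> by (auto simp: X1_def)
            then have "card {q'. q' < N \<and> q' \<notin> A' \<and> B ! q'} = card {q'. q' < N \<and> q' \<notin> A \<and> B ! q'} - 1"
              unfolding e by (intro card_Diff_singleton) simp
            also have "\<dots> \<le> a - 1" using Probe.prems(3) B by (auto simp: X1_def)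
            finally show "card {q'. q' < N \<and> q' \<notin> A' \<and> B ! q'} \<le> a - 1" .
          qed
          have c1: "card (dt_out t1 ` X1) \<le> g k' (a - 1) b"
            by (rule Probe.IH(2)[where X=X1 and A=A' and k=k' and a="a - 1" and b=b]) (fact l1, fact p1, fact o1, fact ag1, simp add: b' Probe.prems(5))
          show ?thesis using cs c0 c1 g_data[of a k' b] False k by simp
        qed
      next
        case False
        have o: "\<And>B. {q'. q' < N \<and> q' \<notin> A' \<and> B ! q'} = {q'. q' < N \<and> q' \<notin> A \<and> B ! q'}"
          using False by (auto simp: A'_def)
        have qin: "q \<in> {N..<L} - A" using False qL qA by auto
        have e: "{N..<L} - A' = ({N..<L} - A) - {q}" by (auto simp: A'_def)
        have cb: "card ({N..<L} - A') = card ({N..<L} - A) - 1"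
          unfolding e using qin by (intro card_Diff_singleton) simp
        have "card ({N..<L} - A) > 0" using qin by (metis card_gt_0_iff empty_iff finite_Diff finite_atLeastLessThan)
        then have b0: "b > 0" using Probe.prems(5) by simp
        have cb': "card ({N..<L} - A') \<le> b - 1" using cb Probe.prems(5) by simp
        have c1: "card (dt_out t1 ` X1) \<le> g k' a (b - 1)"
          by (rule Probe.IH(2)[where X=X1 and A=A' and k=k' and a=a and b="b - 1"]) (fact l1, fact p1, use Probe.prems(3) sub1 in \<open>simp add: o subset_iff\<close>, fact ag1, fact cb')
        have c0: "card (dt_out t0 ` X0) \<le> g k' a (b - 1)"
          by (rule Probe.IH(1)[where X=X0 and A=A' and k=k' and a=a and b="b - 1"]) (fact l0, fact p0, use Probe.prems(3) sub0 in \<open>simp add: o subset_iff\<close>, fact ag0, fact cb')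
        show ?thesis using cs c0 c1 g_red[OF b0, of k' a] k by simp
      qed
    qed
  qed
qed

lemma e_ge: "8/3 \<le> exp (1::real)"
proof -
  obtain u where u: "exp (1::real) = (\<Sum>m<4. 1 ^ m / fact m) + exp u / fact 4 * 1 ^ 4"
    using Maclaurin_exp_le[of 1 4] by auto
  have "(\<Sum>m<4. (1::real) ^ m / fact m) = 8/3" by (simp add: eval_nat_numeral)
  moreover have "exp u / fact 4 * 1 ^ 4 \<ge> (0::real)" by simp
  ultimately show ?thesis using u by linarith
qed

lemma ln2_ge: "2/3 \<le> ln (2::real)"
proof -
  obtain u where u: "exp (-2/3::real) = (\<Sum>m<4. (-2/3) ^ m / fact m) + exp u / fact 4 * (-2/3) ^ 4"
    using Maclaurin_exp_le[of "-2/3" 4] by auto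
  have "(\<Sum>m<4. (-2/3::real) ^ m / fact m) = 41/81" by (simp add: eval_nat_numeral)
  moreover have "exp u / fact 4 * (-2/3) ^ 4 \<ge> (0::real)" by simp
  ultimately have "exp (-2/3::real) \<ge> 1/2" using u by linarith
  then have "exp (2/3::real) \<le> 2" by (simp add: exp_minus field_simps)
  then show ?thesis by (metis exp_le_cancel_iff exp_ln zero_less_numeral)
qed

lemma ln2_le: "ln (2::real) \<le> 3/4"
proof -
  have "1 + 3/4 + (3/4)\<^sup>2 / 2 \<le> exp (3/4::real)" by (rule exp_lower_Taylor_quadratic) simp
  then have "2 \<le> exp (3/4::real)" by (simp add: power2_eq_square)
  then show ?thesis by (metis exp_le_cancel_iff exp_ln zero_less_numeral)
qed

lemma g_le: "g k a b \<le> 2 ^ b * (((k - b) + a) choose a)"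
proof (cases "b \<le> k")
  case True then show ?thesis by (simp add: g_def min_def)
next
  case False
  then have "min b k = k" "k - b = 0" by auto
  then show ?thesis using False by (simp add: g_def)
qed

lemma binom_ratio:
  "K \<le> N \<Longrightarrow> r \<le> K \<Longrightarrow> real N ^ r * real (K choose r) \<le> real K ^ r * real (N choose r)"
proof (induction r)
  case 0 then show ?case by simp
next
  case (Suc r)
  have id: "\<And>M. r < M \<Longrightarrow> real (M choose Suc r) * (real r + 1) = (real M - real r) * real (M choose r)"
  proof -
    fix M :: nat assume "r < M"
    have "Suc r * (M choose Suc r) = M * ((M - 1) choose r)"
      using times_binomial_minus1_eq[of "Suc r" M] by simp
    also have "\<dots> = (M - r) * (M choose r)" using binomial_absorb_comp[of M r] by simp
    finally have "real (Suc r * (M choose Suc r)) = real ((M - r) * (M choose r))" by simp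
    then show "real (M choose Suc r) * (real r + 1) = (real M - real r) * real (M choose r)"
      using \<open>r < M\<close> by (simp add: of_nat_diff algebra_simps)
  qed
  have IH: "real N ^ r * real (K choose r) \<le> real K ^ r * real (N choose r)" using Suc by simp
  have rK: "r < K" "r < N" using Suc by auto
  have "real N ^ Suc r * real (K choose Suc r) * (real r + 1)
        = real N * real N ^ r * (real (K choose Suc r) * (real r + 1))" by (simp add: algebra_simps)
  also have "\<dots> = real N * real N ^ r * ((real K - real r) * real (K choose r))"
    by (simp only: id[OF rK(1)])
  also have "\<dots> = real N * (real K - real r) * (real N ^ r * real (K choose r))" by (simp add: algebra_simps)
  also have "\<dots> \<le> real N * (real K - real r) * (real K ^ r * real (N choose r))"
    using IH rK by (intro mult_left_mono) auto
  also have "\<dots> \<le> real K * (real N - real r) * (real K ^ r * real (N choose r))"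
  proof (rule mult_right_mono)
    show "real N * (real K - real r) \<le> real K * (real N - real r)"
      using Suc.prems by (simp add: algebra_simps mult_right_mono)
  qed simp
  also have "\<dots> = real K * real K ^ r * ((real N - real r) * real (N choose r))" by (simp add: algebra_simps)
  also have "\<dots> = real K * real K ^ r * (real (N choose Suc r) * (real r + 1))"
    by (simp only: id[OF rK(2)])
  also have "\<dots> = real K ^ Suc r * real (N choose Suc r) * (real r + 1)" by (simp add: algebra_simps)
  finally show ?case by (simp add: mult_le_cancel_right)
qed

lemma contra:
  fixes c :: real
  assumes "1 \<le> r" "r \<le> K" "real n > c * real K" "0 < c" "c ^ r \<ge> 2 ^ s"
    and "real (n choose r) \<le> 2 ^ s * real (K choose r)"
  shows False
proof -
  have "(2::real) ^ s \<ge> 1" by simp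
  then have "c ^ r \<ge> 1" using assms(5) by linarith
  have c1: "c \<ge> 1"
  proof (rule ccontr)
    assume "\<not> c \<ge> 1"
    then have "c ^ Suc (r - 1) < 1" using assms(4) by (intro power_Suc_less_one) auto
    with assms(1) \<open>c ^ r \<ge> 1\<close> show False by simp
  qed
  have K0: "real K \<ge> 0" by simp
  have "real K \<le> c * real K" using c1 K0 by (simp add: mult_right_mono[of 1 c, simplified])
  then have "K \<le> n" using assms(3) by linarith
  have pos: "real (K choose r) > 0" using assms(2) by (simp add: zero_less_binomial)
  have "real n ^ r * real (K choose r) \<le> real K ^ r * real (n choose r)"
    by (rule binom_ratio) (use \<open>K \<le> n\<close> assms(2) in auto)
  also have "\<dots> \<le> real K ^ r * (2 ^ s * real (K choose r))"
    using assms(6) by (intro mult_left_mono) auto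
  also have "\<dots> \<le> real K ^ r * (c ^ r * real (K choose r))"
    using assms(5) pos by (intro mult_left_mono mult_right_mono) auto
  finally have "real n ^ r \<le> (c * real K) ^ r" using pos by (simp add: power_mult_distrib algebra_simps)
  moreover have "(c * real K) ^ r < real n ^ r"
    using assms(1,3,4) K0 by (intro power_strict_mono) auto
  ultimately show False by simp
qed

lemma key:
  fixes n s t r :: nat and R :: "nat set \<Rightarrow> bool list \<Rightarrow> bool"
  assumes A2: "\<forall>S B. R S B \<longrightarrow> S \<subseteq> {1..n} \<and> length B = n + s"
    and A3: "\<forall>S. S \<subseteq> {1..n} \<longrightarrow> (\<exists>B. R S B)"
    and A4: "\<forall>S B. R S B \<longrightarrow> (\<forall>l\<in>{1..n}. B ! (l - 1) \<longleftrightarrow> l \<in> S)"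
    and A5: "\<forall>r\<in>{1..n}. \<exists>T :: nat set dtree. \<forall>S B.
           S \<subseteq> {1..n} \<and> card S = r \<and> R S B \<longrightarrow> dt_probes T B \<le> r * t \<and> dt_out T B = S"
    and r: "r \<in> {1..n}"
  shows "(n choose r) \<le> g (r * t) r s"
proof -
  obtain T :: "nat set dtree" where T: "\<forall>S B. S \<subseteq> {1..n} \<and> card S = r \<and> R S B \<longrightarrow> dt_probes T B \<le> r * t \<and> dt_out T B = S"
    using A5 r by blast
  define X where "X = {B. \<exists>S. S \<subseteq> {1..n} \<and> card S = r \<and> R S B}"
  have ones: "\<forall>B\<in>X. card {q. q < n \<and> q \<notin> {} \<and> B ! q} \<le> r"
  proof
    fix B assume "B \<in> X"
    then obtain S where S: "S \<subseteq> {1..n}" "card S = r" "R S B" unfolding X_def by blast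
    have A4': "\<And>l. l \<in> {1..n} \<Longrightarrow> B ! (l - 1) \<longleftrightarrow> l \<in> S" using A4 S(3) by blast
    have e: "{q. q < n \<and> q \<notin> {} \<and> B ! q} = (\<lambda>l. l - 1) ` S"
    proof (rule set_eqI, rule iffI)
      fix q assume "q \<in> {q. q < n \<and> q \<notin> {} \<and> B ! q}"
      then have "q < n" "B ! q" by auto
      then have "Suc q \<in> S" using A4'[of "Suc q"] by simp
      then show "q \<in> (\<lambda>l. l - 1) ` S" by (intro image_eqI[of _ _ "Suc q"]) auto
    next
      fix q assume "q \<in> (\<lambda>l. l - 1) ` S"
      then obtain l where l: "l \<in> S" "q = l - 1" by blast
      then have l1: "l \<in> {1..n}" using S by auto
      then have "B ! (l - 1)" using A4' l by blast
      then show "q \<in> {q. q < n \<and> q \<notin> {} \<and> B ! q}" using l l1 by auto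
    qed
    have "inj_on (\<lambda>l. l - 1) S"
    proof (rule inj_onI)
      fix x y assume "x \<in> S" "y \<in> S" "x - 1 = y - 1"
      moreover have "x \<ge> 1" "y \<ge> 1" using S(1) \<open>x \<in> S\<close> \<open>y \<in> S\<close> by auto
      ultimately show "x = y" by linarith
    qed
    then show "card {q. q < n \<and> q \<notin> {} \<and> B ! q} \<le> r" unfolding e using S(2) card_image[OF \<open>inj_on (\<lambda>l. l - 1) S\<close>] by simp
  qed
  have len: "\<forall>B\<in>X. length B = n + s" using A2 unfolding X_def by blast
  have pr: "\<forall>B\<in>X. dt_probes T B \<le> r * t" using T unfolding X_def by blast
  have c: "card (dt_out T ` X) \<le> g (r * t) r s"
    by (rule count[where N=n and L="n+s" and X=X and A="{}" and k="r*t" and a=r and b=s])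
      (fact len, fact pr, fact ones, simp, simp)
  have img: "dt_out T ` X = {S. S \<subseteq> {1..n} \<and> card S = r}"
  proof
    show "dt_out T ` X \<subseteq> {S. S \<subseteq> {1..n} \<and> card S = r}"
    proof
      fix y assume "y \<in> dt_out T ` X"
      then obtain B where "B \<in> X" "y = dt_out T B" by blast
      then obtain S where S: "S \<subseteq> {1..n}" "card S = r" "R S B" "y = dt_out T B" unfolding X_def by blast
      then have "y = S" using T by blast
      then show "y \<in> {S. S \<subseteq> {1..n} \<and> card S = r}" using S by simp
    qed
  next
    show "{S. S \<subseteq> {1..n} \<and> card S = r} \<subseteq> dt_out T ` X"
    proof
      fix S assume "S \<in> {S. S \<subseteq> {1..n} \<and> card S = r}"
      then have S: "S \<subseteq> {1..n}" "card S = r" by auto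
      then obtain B where B: "R S B" using A3 by blast
      then have "B \<in> X" unfolding X_def using S by blast
      moreover have "dt_out T B = S" using T S B by blast
      ultimately show "S \<in> dt_out T ` X" by (metis image_eqI)
    qed
  qed
  have "card {S. S \<subseteq> {1..n} \<and> card S = r} = n choose r"
    using n_subsets[of "{1..n}" r] by simp
  then show ?thesis using c img by simp
qed

theorem mainTheorem8:
  fixes n s t :: nat and R :: "nat set \<Rightarrow> bool list \<Rightarrow> bool"
  assumes "n \<ge> 2"
    and "\<forall>S B. R S B \<longrightarrow> S \<subseteq> {1..n} \<and> length B = n + s"
    and "\<forall>S. S \<subseteq> {1..n} \<longrightarrow> (\<exists>B. R S B)"
    and "\<forall>S B. R S B \<longrightarrow> (\<forall>l\<in>{1..n}. B ! (l - 1) \<longleftrightarrow> l \<in> S)"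
    and "\<forall>r\<in>{1..n}. \<exists>T :: nat set dtree. \<forall>S B.
           S \<subseteq> {1..n} \<and> card S = r \<and> R S B \<longrightarrow> dt_probes T B \<le> r * t \<and> dt_out T B = S"
  shows "(real s + 1 / ln 2) * real t \<ge> real n / (exp 1 * ln 2) \<and>
         (s > 0 \<longrightarrow> real s * real t \<ge> real n / 2)"
proof -
  have K: "\<And>r. r \<in> {1..n} \<Longrightarrow> (n choose r) \<le> g (r * t) r s"
    using key[OF assms(2-5)] by blast
  have K2: "\<And>r. r \<in> {1..n} \<Longrightarrow> real (n choose r) \<le> 2 ^ s * real (((r * t - s) + r) choose r)"
  proof -
    fix r assume "r \<in> {1..n}"
    then have "(n choose r) \<le> 2 ^ s * (((r * t - s) + r) choose r)" using K g_le order_trans by blast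
    then show "real (n choose r) \<le> 2 ^ s * real (((r * t - s) + r) choose r)"
      by (metis of_nat_le_iff of_nat_mult of_nat_numeral of_nat_power)
  qed
  have r1: "1 \<in> {1..n}" using assms(1) by simp
  have t1: "t \<ge> 1"
  proof (rule ccontr)
    assume "\<not> t \<ge> 1"
    then have "t = 0" by simp
    then have "n \<le> g 0 1 s" using K[OF r1] by simp
    then show False using assms(1) g0[of 1 s] by simp
  qed
  have n1: "real n \<le> 2 ^ s * real ((t - s) + 1)" using K2[OF r1] by simp
  have e83: "8/3 \<le> exp (1::real)" by (rule e_ge)
  have l23: "2/3 \<le> ln (2::real)" by (rule ln2_ge)
  have l34: "ln (2::real) \<le> 3/4" by (rule ln2_le)
  have tpos: "real t \<ge> 1" using t1 by simp
  have C1: "real n \<le> exp 1 * real t * (real s * ln 2 + 1)"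
  proof (cases "s \<le> 3")
    case True
    show ?thesis
    proof (cases "s = 0")
      case True
      then have "real n \<le> real t + 1" using n1 by simp
      also have "\<dots> \<le> 2 * real t" using tpos by simp
      also have "\<dots> \<le> exp 1 * real t" using e83 tpos by (intro mult_right_mono) auto
      also have "\<dots> = exp 1 * real t * (real s * ln 2 + 1)" using True by simp
      finally show ?thesis .
    next
      case False
      then have "real ((t - s) + 1) \<le> real t" using t1 by simp
      then have nt: "real n \<le> 2 ^ s * real t" using n1
        by (smt (verit) mult_left_mono zero_le_power)
      have "(2::real) ^ s \<le> exp 1 * (real s * ln 2 + 1)"
      proof -
        have "s = 1 \<or> s = 2 \<or> s = 3" using False \<open>s \<le> 3\<close> by auto
        then have "(2::real) ^ s \<le> (8/3) * (real s * (2/3) + 1)" by auto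
        also have "\<dots> \<le> exp 1 * (real s * ln 2 + 1)"
          using e83 l23 by (intro mult_mono add_right_mono mult_left_mono) auto
        finally show ?thesis .
      qed
      then have "2 ^ s * real t \<le> exp 1 * (real s * ln 2 + 1) * real t"
        using tpos by (intro mult_right_mono) auto
      then show ?thesis using nt by (simp add: algebra_simps)
    qed
  next
    case False
    then have s4: "real s \<ge> 4" by simp
    show ?thesis
    proof (rule ccontr)
      assume H: "\<not> real n \<le> exp 1 * real t * (real s * ln 2 + 1)"
      define r where "r = nat \<lfloor>real s * ln 2\<rfloor> + 1"
      have sl0: "real s * ln 2 \<ge> 0" by simp
      have rlo: "real r > real s * ln 2" unfolding r_def using sl0
        by (simp add: of_nat_nat) linarith
      have rhi: "real r \<le> real s * ln 2 + 1" unfolding r_def using sl0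
        by (simp add: of_nat_nat)
      have r1': "1 \<le> r" unfolding r_def by simp
      define K where "K = (r * t - s) + r"
      have Kr: "r \<le> K" unfolding K_def by simp
      have A: "real t * (real s * ln 2 + 1) \<ge> 0" by simp
      have Kle: "real K \<le> real t * (real s * ln 2 + 1)"
      proof (cases "s \<le> r * t")
        case True
        then have "real K = real r * real t - real s + real r" unfolding K_def by (simp add: of_nat_diff)
        also have "\<dots> \<le> (real s * ln 2 + 1) * real t + (real s * ln 2 + 1) - real s"
          using rhi tpos by (smt (verit) mult_right_mono)
        also have "\<dots> \<le> real t * (real s * ln 2 + 1)"
        proof -
          have "real s * ln 2 \<le> real s * (3/4)" using l34 by (intro mult_left_mono) auto
          then have "1 + real s * ln 2 \<le> real s" using s4 by linarith
          then show ?thesis by (simp add: algebra_simps)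
        qed
        finally show ?thesis .
      next
        case False
        then have "real K = real r" unfolding K_def by simp
        also have "\<dots> \<le> real r * real t" using tpos mult_left_mono[of 1 "real t" "real r"] by simp
        also have "\<dots> \<le> (real s * ln 2 + 1) * real t" using rhi tpos by (intro mult_right_mono) auto
        finally show ?thesis by (simp add: algebra_simps)
      qed
      have nK: "real n > exp 1 * real K"
      proof -
        have "exp 1 * real K \<le> exp 1 * (real t * (real s * ln 2 + 1))" using Kle by simp
        then show ?thesis using H by (simp add: algebra_simps)
      qed
      have "real r \<le> real K" using Kr by simp
      have "real K \<le> exp 1 * real K" using e83 by (simp add: mult_right_mono[of 1 "exp 1", simplified])
      then have rn: "r \<le> n" using nK Kr by linarith
      have pw: "exp 1 ^ r \<ge> (2::real) ^ s"
      proof -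
        have "(2::real) ^ s = exp (real s * ln 2)" by (simp add: exp_of_nat_mult)
        also have "\<dots> \<le> exp (real r)" using rlo by simp
        also have "\<dots> = exp 1 ^ r" by (metis exp_of_nat_mult mult.right_neutral)
        finally show ?thesis .
      qed
      have "real (n choose r) \<le> 2 ^ s * real (K choose r)"
        using K2[of r] r1' rn unfolding K_def by simp
      then show False using contra[OF r1' Kr nK _ pw] by simp
    qed
  qed
  have G1: "(real s + 1 / ln 2) * real t \<ge> real n / (exp 1 * ln 2)"
  proof -
    have lp: "ln (2::real) > 0" by simp
    have "(real s + 1 / ln 2) * real t = exp 1 * real t * (real s * ln 2 + 1) / (exp 1 * ln 2)"
      using lp by (simp add: field_simps)
    also have "\<dots> \<ge> real n / (exp 1 * ln 2)"
      using C1 lp by (intro divide_right_mono) auto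
    finally show ?thesis .
  qed
  have G2: "s > 0 \<longrightarrow> real s * real t \<ge> real n / 2"
  proof
    assume s0: "s > 0"
    have "n \<le> 2 * s * t"
    proof (rule ccontr)
      assume H: "\<not> n \<le> 2 * s * t"
      have sn: "s \<le> n"
      proof (rule ccontr)
        assume "\<not> s \<le> n"
        then have "n \<le> s * t" using t1 by (metis le_trans mult_le_mono2 mult_1_right nat_le_linear)
        then show False using H by simp
      qed
      have st: "s \<le> s * t" using t1 by simp
      have Kd: "(s * t - s) + s = s * t" using st by simp
      have "real (n choose s) \<le> 2 ^ s * real ((s * t) choose s)"
        using K2[of s] s0 sn Kd by simp
      moreover have "real n > 2 * real (s * t)" using H by linarith
      ultimately show False
        using contra[where r=s and K="s * t" and n=n and c=2 and s=s] s0 st by simp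
    qed
    then have "real n \<le> 2 * real s * real t" by (metis of_nat_le_iff of_nat_mult of_nat_numeral)
    then show "real s * real t \<ge> real n / 2" by simp
  qed
  show ?thesis using G1 G2 by blast
qed

end
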